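(* Let $m,n,p,q$ be positive integers and $G=K_{m,n}\vee K_{p,q}$. Then $$\tau(G)=(m+n+p+q)^2(m+p+q)^{n-1}(n+p+q)^{m-1}(p+m+n)^{q-1}(q+m+n)^{p-1}.$$
   Context: $K_{m,n}$ is the complete bipartite graph with parts of sizes $m$ and $n$. The join $G_1\vee G_2$ has vertex set $V(G_1)\sqcup V(G_2)$ and edge set $E(G_1)\cup E(G_2)\cup\{uv:u\in V(G_1),v\in V(G_2)\}$. $\tau(G)$ is the number of spanning trees of $G$. *)

theory Defs
  imports Main
begin

definition connected_by :: "'a set \<Rightarrow> 'a set set \<Rightarrow> bool" where
  "connected_by V F \<longleftrightarrow>
     (\<forall>u\<in>V. \<forall>v\<in>V. (u, v) \<in> {(x, y). {x, y} \<in> F}\<^sup>*)"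

definition acyclic_edges :: "'a set set \<Rightarrow> bool" where
  "acyclic_edges F \<longleftrightarrow>
     (\<forall>x y. {x, y} \<in> F \<and> x \<noteq> y \<longrightarrow> (x, y) \<notin> {(a, b). {a, b} \<in> F - {{x, y}}}\<^sup>*)"

definition spanning_tree :: "'a set \<Rightarrow> 'a set set \<Rightarrow> 'a set set \<Rightarrow> bool" where
  "spanning_tree V E T \<longleftrightarrow> T \<subseteq> E \<and> connected_by V T \<and> acyclic_edges T"

definition num_spanning_trees :: "'a set \<Rightarrow> 'a set set \<Rightarrow> nat" where
  "num_spanning_trees V E = card {T. spanning_tree V E T}"

definition Kbip_V :: "nat \<Rightarrow> nat \<Rightarrow> (nat + nat) set" where
  "Kbip_V m n = Inl ` {..<m} \<union> Inr ` {..<n}"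

definition Kbip_E :: "nat \<Rightarrow> nat \<Rightarrow> (nat + nat) set set" where
  "Kbip_E m n = {{Inl i, Inr j} | i j. i < m \<and> j < n}"

definition join_V :: "'a set \<Rightarrow> 'b set \<Rightarrow> ('a + 'b) set" where
  "join_V V1 V2 = Inl ` V1 \<union> Inr ` V2"

definition join_E :: "'a set \<Rightarrow> 'a set set \<Rightarrow> 'b set \<Rightarrow> 'b set set \<Rightarrow> ('a + 'b) set set" where
  "join_E V1 E1 V2 E2 =
     (\<lambda>e. Inl ` e) ` E1 \<union> (\<lambda>e. Inr ` e) ` E2 \<union> {{Inl u, Inr v} | u v. u \<in> V1 \<and> v \<in> V2}"

end

theory Submission
  imports Defs "Jordan_Normal_Form.Determinant"
begin

definition RF :: "'a set \<Rightarrow> 'a set set \<Rightarrow> 'a \<Rightarrow> ('a \<Rightarrow> 'a) set" where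
 "RF V E r = {f. (\<forall>v. v \<notin> V \<longrightarrow> f v = v) \<and> f r = r \<and> (\<forall>v\<in>V - {r}. {v, f v} \<in> E)
     \<and> (\<forall>v\<in>V. \<exists>k. (f^^k) v = r)}"

lemma RF_reach: "f \<in> RF V E r \<Longrightarrow> v \<in> V \<Longrightarrow> \<exists>k. (f^^k) v = r"
  unfolding RF_def mem_Collect_eq by blast
lemma RF_root: "f \<in> RF V E r \<Longrightarrow> f r = r"
  unfolding RF_def mem_Collect_eq by blast
lemma RF_out: "f \<in> RF V E r \<Longrightarrow> v \<notin> V \<Longrightarrow> f v = v"
  unfolding RF_def mem_Collect_eq by blast
lemma RF_edge: "f \<in> RF V E r \<Longrightarrow> v \<in> V \<Longrightarrow> v \<noteq> r \<Longrightarrow> {v, f v} \<in> E"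
  unfolding RF_def mem_Collect_eq by blast

definition TF :: "'a set \<Rightarrow> 'a \<Rightarrow> ('a \<Rightarrow> 'a) \<Rightarrow> 'a set set" where
 "TF V r f = {{v, f v} | v. v \<in> V - {r}}"

definition simple_graph :: "'a set \<Rightarrow> 'a set set \<Rightarrow> bool" where
 "simple_graph V E \<longleftrightarrow> (\<forall>e\<in>E. \<exists>u v. e = {u, v} \<and> u \<in> V \<and> v \<in> V \<and> u \<noteq> v)"

lemma rt_sym:
  assumes "(a, b) \<in> {(x, y). {x, y} \<in> F}\<^sup>*"
  shows "(b, a) \<in> {(x, y). {x, y} \<in> F}\<^sup>*"
  using assms
proof (induction rule: rtrancl_induct)
  case base then show ?case by simp
next
  case (step y z)
  then have "(z, y) \<in> {(x, y). {x, y} \<in> F}" by (simp add: insert_commute)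
  then show ?case using step(3) by (rule converse_rtrancl_into_rtrancl)
qed

lemma RF_in_V:
  assumes "simple_graph V E" "r \<in> V" "f \<in> RF V E r" "v \<in> V"
  shows "f v \<in> V"
proof (cases "v = r")
  case True then show ?thesis using assms RF_root by metis
next
  case False
  then have "{v, f v} \<in> E" using assms RF_edge by metis
  moreover have "\<forall>e\<in>E. \<exists>u w. e = {u, w} \<and> u \<in> V \<and> w \<in> V \<and> u \<noteq> w"
    using assms(1) unfolding simple_graph_def .
  ultimately have "\<exists>u w. {v, f v} = {u, w} \<and> u \<in> V \<and> w \<in> V \<and> u \<noteq> w" by (rule bspec[rotated])
  then obtain a b where eq: "{v, f v} = {a, b}" and ab: "a \<in> V" "b \<in> V"
    by (elim exE conjE)
  have "f v \<in> {a, b}" by (simp add: eq[symmetric])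
  then show ?thesis using ab by blast
qed

lemma RF_pow_in_V:
  assumes "simple_graph V E" "r \<in> V" "f \<in> RF V E r" "v \<in> V"
  shows "(f^^k) v \<in> V"
  proof (induction k)
  case 0 then show ?case using assms by simp
next
  case (Suc k) then show ?case using RF_in_V[OF assms(1-3)] by simp
qed

lemma funpow_fix: "f r = r \<Longrightarrow> (f^^k) r = r"
  by (induction k) auto

lemma periodic_root:
  assumes "f r = r" "(f^^j) v = r" "(f^^p) v = v" "p > 0"
  shows "v = r"
proof -
  have pj: "(f^^(p*j)) v = v"
  proof (induction j)
    case 0 then show ?case by simp
  next
    case (Suc j)
    have "p * Suc j = p * j + p" by simp
    then have "(f^^(p * Suc j)) v = (f^^(p*j)) ((f^^p) v)"
      by (simp only: funpow_add comp_apply)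
    then show ?case using Suc assms(3) by simp
  qed
  have "p * j \<ge> j" using assms(4) by simp
  then have "p * j = (p*j - j) + j" by simp
  then have "(f^^(p*j)) v = (f^^((p*j - j) + j)) v" by simp
  also have "\<dots> = (f^^(p*j - j)) ((f^^j) v)"
    by (simp only: funpow_add comp_apply)
  also have "\<dots> = r" using assms(1,2) by (simp add: funpow_fix)
  finally have c: "(f^^(p*j)) v = r" .
  show ?thesis by (rule trans[OF pj[symmetric] c])
qed

lemma TF_connected:
  assumes "simple_graph V E" "r \<in> V" "f \<in> RF V E r"
  shows "connected_by V (TF V r f)"
proof -
  let ?R = "{(x, y). {x, y} \<in> TF V r f}"
  have step: "(w, f w) \<in> ?R\<^sup>*" if "w \<in> V" for w
  proof (cases "w = r")
    case True then show ?thesis using RF_root[OF assms(3)] by simp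
  next
    case False
    then have "{w, f w} \<in> TF V r f" using that unfolding TF_def
      by (intro CollectI exI[of _ w]) simp
    then show ?thesis by (intro r_into_rtrancl) simp
  qed
  have pw: "(v, (f^^k) v) \<in> ?R\<^sup>*" if "v \<in> V" for v k
  proof (induction k)
    case 0 then show ?case by simp
  next
    case (Suc k)
    have "(f^^k) v \<in> V" using RF_pow_in_V[OF assms that] .
    then have "((f^^k) v, (f^^Suc k) v) \<in> ?R\<^sup>*" using step[of "(f^^k) v"] by simp
    then show ?case using Suc by (rule rtrancl_trans[rotated])
  qed
  have tor: "(v, r) \<in> ?R\<^sup>*" if "v \<in> V" for v
  proof -
    obtain k where kk: "(f^^k) v = r" using RF_reach[OF assms(3) \<open>v \<in> V\<close>] by blast
    show ?thesis using pw[OF that, of k] unfolding kk .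
  qed
  show ?thesis unfolding connected_by_def
  proof (intro ballI)
    fix u v assume "u \<in> V" "v \<in> V"
    have "(r, v) \<in> ?R\<^sup>*" using rt_sym[OF tor[OF \<open>v \<in> V\<close>]] .
    then show "(u, v) \<in> ?R\<^sup>*" using tor[OF \<open>u \<in> V\<close>] by (rule rtrancl_trans[rotated])
  qed
qed

lemma TF_memD:
  assumes "e \<in> TF V r f"
  obtains u where "u \<in> V" "u \<noteq> r" "e = {u, f u}"
  using assms unfolding TF_def mem_Collect_eq by blast

lemma TF_memI:
  assumes "u \<in> V" "u \<noteq> r"
  shows "{u, f u} \<in> TF V r f"
  using assms unfolding TF_def by (intro CollectI exI[of _ u]) simp

lemma TF_acyclic:
  assumes sg: "simple_graph V E" and rV: "r \<in> V" and fR: "f \<in> RF V E r"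
  shows "acyclic_edges (TF V r f)"
  unfolding acyclic_edges_def
proof (intro allI impI)
  fix x y assume H: "{x, y} \<in> TF V r f \<and> x \<noteq> y"
  then obtain v where v: "v \<in> V" "v \<noteq> r" and xy: "{x, y} = {v, f v}"
    using TF_memD by metis
  let ?R = "{(a, b). {a, b} \<in> TF V r f - {{x, y}}}"
  define D where "D = {u. \<exists>k. (f^^k) u = v}"
  have keyu: "u \<in> D \<longleftrightarrow> f u \<in> D" if "u \<noteq> v" for u
  proof
    assume "u \<in> D"
    then obtain k where k: "(f^^k) u = v" unfolding D_def by blast
    with that obtain k' where "k = Suc k'" by (cases k) auto
    with k have "(f^^k') (f u) = v" by (simp only: funpow_Suc_right comp_apply)
    then show "f u \<in> D" unfolding D_def by blast
  next
    assume "f u \<in> D"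
    then obtain k where k: "(f^^k) (f u) = v" unfolding D_def by blast
    then have "(f^^Suc k) u = v" by (simp only: funpow_Suc_right comp_apply)
    then show "u \<in> D" unfolding D_def by blast
  qed
  have key: "a \<in> D \<longleftrightarrow> b \<in> D" if "(a, b) \<in> ?R" for a b
  proof -
    from that have ab: "{a, b} \<in> TF V r f" "{a, b} \<noteq> {x, y}" by auto
    then obtain u where u: "u \<in> V" "u \<noteq> r" "{a, b} = {u, f u}" using TF_memD by metis
    have "u \<noteq> v" using ab(2) u(3) xy by auto
    then have "u \<in> D \<longleftrightarrow> f u \<in> D" by (rule keyu)
    moreover have "(a = u \<and> b = f u) \<or> (a = f u \<and> b = u)" using u(3) by (simp add: doubleton_eq_iff)
    ultimately show ?thesis by auto
  qed
  have pres: "x \<in> D \<longleftrightarrow> z \<in> D" if "(x, z) \<in> ?R\<^sup>*" for z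
    using that
  proof (induction rule: rtrancl_induct)
    case base then show ?case by simp
  next
    case (step y z) then show ?case using key by blast
  qed
  have vD: "v \<in> D" unfolding D_def by (intro CollectI exI[of _ 0]) simp
  have fvD: "f v \<notin> D"
  proof
    assume "f v \<in> D"
    then obtain k where k: "(f^^k) (f v) = v" unfolding D_def by blast
    then have per: "(f^^Suc k) v = v" by (simp only: funpow_Suc_right comp_apply)
    obtain j where j: "(f^^j) v = r" using RF_reach[OF fR v(1)] by blast
    have "v = r" by (rule periodic_root[OF RF_root[OF fR] j per]) simp
    with v(2) show False by simp
  qed
  have "(x = v \<and> y = f v) \<or> (x = f v \<and> y = v)" using xy by (simp add: doubleton_eq_iff)
  then have "\<not> (x \<in> D \<longleftrightarrow> y \<in> D)" using vD fvD by auto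
  then show "(x, y) \<notin> ?R\<^sup>*" using pres by blast
qed

lemma TF_subset_E:
  assumes "f \<in> RF V E r"
  shows "TF V r f \<subseteq> E"
  using RF_edge[OF assms] by (auto elim!: TF_memD)

lemma TF_spanning:
  assumes "simple_graph V E" "r \<in> V" "f \<in> RF V E r"
  shows "spanning_tree V E (TF V r f)"
  unfolding spanning_tree_def
  using TF_subset_E[OF assms(3)] TF_connected[OF assms] TF_acyclic[OF assms] by blast

lemma pigeon_nat:
  assumes "finite S" "\<And>k::nat. h k \<in> S"
  shows "\<exists>i j. i < j \<and> h i = h j"
proof (rule ccontr)
  assume "\<not> ?thesis"
  then have "inj h" unfolding inj_def by (metis linorder_neqE_nat)
  then have "finite (UNIV :: nat set)"
    by (rule inj_on_finite) (use assms in auto)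
  then show False by simp
qed

lemma RF_B_step:
  assumes sg: "simple_graph V E" and rV: "r \<in> V" and fR: "f \<in> RF V E r" and gR: "g \<in> RF V E r"
    and eq: "TF V r f = TF V r g" and v: "v \<in> V" "f v \<noteq> g v"
  shows "g v \<in> V \<and> f (g v) \<noteq> g (g v)"
proof -
  have vr: "v \<noteq> r" using v RF_root[OF fR] RF_root[OF gR] by auto
  have "{v, g v} \<in> TF V r f" using eq TF_memI[OF v(1) vr, of g] by simp
  then obtain u where u: "u \<in> V" "u \<noteq> r" "{v, g v} = {u, f u}" using TF_memD by metis
  then have "(v = u \<and> g v = f u) \<or> (v = f u \<and> g v = u)" by (simp add: doubleton_eq_iff)
  with v have gv: "g v = u" "f u = v" by auto
  have "g (g v) \<noteq> v"
  proof
    assume "g (g v) = v"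
    then have per: "(g^^2) v = v" by (simp add: numeral_2_eq_2)
    obtain j where j: "(g^^j) v = r" using RF_reach[OF gR v(1)] by blast
    have "v = r" by (rule periodic_root[OF RF_root[OF gR] j per]) simp
    with vr show False by simp
  qed
  then show ?thesis using gv u by auto
qed

lemma TF_inj:
  assumes sg: "simple_graph V E" and rV: "r \<in> V" and fin: "finite V"
  shows "inj_on (TF V r) (RF V E r)"
proof
  fix f g assume fR: "f \<in> RF V E r" and gR: "g \<in> RF V E r" and eq: "TF V r f = TF V r g"
  show "f = g"
  proof (rule ccontr)
    assume "f \<noteq> g"
    then obtain v0 where v0: "f v0 \<noteq> g v0" by blast
    then have v0V: "v0 \<in> V" using RF_out[OF fR] RF_out[OF gR] by metis
    let ?B = "{v \<in> V. f v \<noteq> g v}"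
    have Bst: "g v \<in> ?B" if "v \<in> ?B" for v
      using RF_B_step[OF sg rV fR gR eq] that by auto
    have inB: "(g^^k) v0 \<in> ?B" for k
    proof (induction k)
      case 0 then show ?case using v0 v0V by simp
    next
      case (Suc k) then show ?case using Bst by simp
    qed
    have "finite ?B" using fin by simp
    then obtain i j where ij: "i < j" "(g^^i) v0 = (g^^j) v0" using pigeon_nat[OF _ inB] by blast
    let ?w = "(g^^i) v0"
    have "j = (j - i) + i" using ij by simp
    then have "(g^^j) v0 = (g^^(j - i)) ?w" by (metis funpow_add comp_apply)
    then have per: "(g^^(j-i)) ?w = ?w" using ij by simp
    have wB: "?w \<in> ?B" by (rule inB)
    obtain t where t: "(g^^t) ?w = r" using RF_reach[OF gR] wB by blast
    have "?w = r" by (rule periodic_root[OF RF_root[OF gR] t per]) (use ij in simp)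
    then show False using wB RF_root[OF fR] RF_root[OF gR] by simp
  qed
qed

lemma simple_edgeD:
  assumes "simple_graph V E" "e \<in> E"
  obtains a b where "e = {a, b}" "a \<in> V" "b \<in> V" "a \<noteq> b"
  using assms unfolding simple_graph_def by blast

lemma TF_surj:
  assumes sg: "simple_graph V E" and rV: "r \<in> V" and T: "spanning_tree V E T"
  shows "\<exists>f \<in> RF V E r. TF V r f = T"
proof -
  let ?R = "{(x, y). {x, y} \<in> T}"
  have TE: "T \<subseteq> E" and conn: "connected_by V T" and acyc: "acyclic_edges T"
    using T unfolding spanning_tree_def by auto
  define dist where "dist v = (LEAST k. (v, r) \<in> ?R ^^ k)" for v
  have dist_ok: "(v, r) \<in> ?R ^^ dist v" if "v \<in> V" for v
  proof -
    have "(v, r) \<in> ?R\<^sup>*" using conn that rV unfolding connected_by_def by blast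
    then obtain k where "(v, r) \<in> ?R ^^ k" using rtrancl_power by blast
    then show ?thesis unfolding dist_def by (rule LeastI)
  qed
  have nbr_V: "u \<in> V" if "(v, u) \<in> ?R" for v u
  proof -
    have "{v, u} \<in> E" using that TE by auto
    then obtain a b where "{v, u} = {a, b}" "a \<in> V" "b \<in> V" using simple_edgeD[OF sg] by metis
    moreover have "u \<in> {v, u}" by simp
    ultimately show ?thesis by auto
  qed
  have ex: "\<exists>u. (v, u) \<in> ?R \<and> dist u < dist v \<and> u \<in> V" if "v \<in> V" "v \<noteq> r" for v
  proof -
    have d: "(v, r) \<in> ?R ^^ dist v" by (rule dist_ok[OF that(1)])
    have "dist v \<noteq> 0" using d that(2) by (cases "dist v") auto
    then obtain k where k: "dist v = Suc k" by (cases "dist v") auto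
    with d obtain u where u: "(v, u) \<in> ?R" "(u, r) \<in> ?R ^^ k" using relpow_Suc_D2 by metis
    have "dist u \<le> k" unfolding dist_def using u(2) by (rule Least_le)
    then show ?thesis using u k nbr_V by auto
  qed
  define f where "f v = (if v \<in> V \<and> v \<noteq> r then (SOME u. (v, u) \<in> ?R \<and> dist u < dist v \<and> u \<in> V) else v)" for v
  have fprop: "(v, f v) \<in> ?R \<and> dist (f v) < dist v \<and> f v \<in> V" if "v \<in> V" "v \<noteq> r" for v
    using someI_ex[OF ex[OF that]] that unfolding f_def by simp
  have reach: "\<exists>k. (f^^k) v = r" if "v \<in> V" for v
    using that
  proof (induction "dist v" arbitrary: v rule: less_induct)
    case less
    show ?case
    proof (cases "v = r")
      case True then show ?thesis by (intro exI[of _ 0]) simp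
    next
      case False
      with less.prems have fp: "dist (f v) < dist v" "f v \<in> V" using fprop by auto
      then obtain k where "(f^^k) (f v) = r" using less.hyps by blast
      then have "(f^^Suc k) v = r" by (simp only: funpow_Suc_right comp_apply)
      then show ?thesis by blast
    qed
  qed
  have fR: "f \<in> RF V E r"
    unfolding RF_def mem_Collect_eq
  proof (intro conjI allI impI ballI)
    fix v assume "v \<notin> V" then show "f v = v" unfolding f_def by simp
  next
    show "f r = r" unfolding f_def by simp
  next
    fix v assume "v \<in> V - {r}"
    then have "{v, f v} \<in> T" using fprop by auto
    then show "{v, f v} \<in> E" using TE by auto
  next
    fix v assume "v \<in> V" then show "\<exists>k. (f^^k) v = r" by (rule reach)
  qed
  have sub: "TF V r f \<subseteq> T"
  proof
    fix e assume "e \<in> TF V r f"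
    then obtain u where "u \<in> V" "u \<noteq> r" "e = {u, f u}" using TF_memD by metis
    then show "e \<in> T" using fprop by auto
  qed
  have sup: "T \<subseteq> TF V r f"
  proof
    fix e assume eT: "e \<in> T"
    show "e \<in> TF V r f"
    proof (rule ccontr)
      assume nin: "e \<notin> TF V r f"
      obtain a b where ab: "e = {a, b}" "a \<in> V" "b \<in> V" "a \<noteq> b"
        using simple_edgeD[OF sg] eT TE by blast
      have "(a, b) \<in> {(x, y). {x, y} \<in> TF V r f}\<^sup>*"
        using TF_connected[OF sg rV fR] ab unfolding connected_by_def by blast
      moreover have "{(x, y). {x, y} \<in> TF V r f} \<subseteq> {(x, y). {x, y} \<in> T - {{a, b}}}"
        using sub nin ab(1) by auto
      ultimately have "(a, b) \<in> {(x, y). {x, y} \<in> T - {{a, b}}}\<^sup>*"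
        using rtrancl_mono by blast
      moreover have "(a, b) \<notin> {(x, y). {x, y} \<in> T - {{a, b}}}\<^sup>*"
        using acyc eT ab unfolding acyclic_edges_def by blast
      ultimately show False by contradiction
    qed
  qed
  show ?thesis using fR sub sup by blast
qed

theorem tau_RF:
  assumes sg: "simple_graph V E" and rV: "r \<in> V" and fin: "finite V"
  shows "num_spanning_trees V E = card (RF V E r)"
proof -
  have "bij_betw (TF V r) (RF V E r) {T. spanning_tree V E T}"
  proof (rule bij_betw_imageI)
    show "inj_on (TF V r) (RF V E r)" by (rule TF_inj[OF sg rV fin])
    show "TF V r ` RF V E r = {T. spanning_tree V E T}"
      using TF_spanning[OF sg rV] TF_surj[OF sg rV] by blast
  qed
  then show ?thesis unfolding num_spanning_trees_def by (simp add: bij_betw_same_card)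
qed



lemma rt_image:
  assumes "(u, v) \<in> {(x, y). {x, y} \<in> T}\<^sup>*"
  shows "(h u, h v) \<in> {(x, y). {x, y} \<in> (`) h ` T}\<^sup>*"
  using assms
proof (induction rule: rtrancl_induct)
  case base then show ?case by simp
next
  case (step y z)
  then have "{y, z} \<in> T" by simp
  then have "h ` {y, z} \<in> (`) h ` T" by (rule imageI)
  then have "(h y, h z) \<in> {(x, y). {x, y} \<in> (`) h ` T}" by simp
  with step(3) show ?case by (rule rtrancl_into_rtrancl)
qed

lemma st_image:
  assumes inj: "inj_on h V" and EV: "\<forall>e\<in>E. e \<subseteq> V" and T: "spanning_tree V E T"
  shows "spanning_tree (h ` V) ((`) h ` E) ((`) h ` T)"
proof -
  have TE: "T \<subseteq> E" and conn: "connected_by V T" and acyc: "acyclic_edges T"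
    using T unfolding spanning_tree_def by auto
  let ?g = "inv_into V h"
  have gh: "?g (h x) = x" if "x \<in> V" for x using inv_into_f_f[OF inj that] .
  have TV: "e \<subseteq> V" if "e \<in> T" for e using that TE EV by auto
  have c2: "connected_by (h ` V) ((`) h ` T)"
    unfolding connected_by_def
  proof (intro ballI)
    fix u' v' assume "u' \<in> h ` V" "v' \<in> h ` V"
    then obtain u v where "u \<in> V" "v \<in> V" "u' = h u" "v' = h v" by blast
    moreover have "(u, v) \<in> {(x, y). {x, y} \<in> T}\<^sup>*" using conn \<open>u \<in> V\<close> \<open>v \<in> V\<close>
      unfolding connected_by_def by blast
    ultimately show "(u', v') \<in> {(x, y). {x, y} \<in> (`) h ` T}\<^sup>*" using rt_image by metis
  qed
  have a2: "acyclic_edges ((`) h ` T)"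
    unfolding acyclic_edges_def
  proof (intro allI impI)
    fix x' y' assume H: "{x', y'} \<in> (`) h ` T \<and> x' \<noteq> y'"
    then obtain e where e: "e \<in> T" "h ` e = {x', y'}" by auto
    have eV: "e \<subseteq> V" using TV e(1) .
    obtain x where x: "x \<in> e" "h x = x'" using e(2) by (metis imageE insertI1)
    obtain y where y: "y \<in> e" "h y = y'" using e(2) by (metis imageE insertI1 insert_commute)
    have "?g ` h ` e = e" using inv_into_image_cancel[OF inj eV] .
    then have exy: "e = {x, y}" using e(2) gh x y eV by auto
    have xy: "x \<noteq> y" using H x y by auto
    let ?R' = "{(a, b). {a, b} \<in> (`) h ` T - {{x', y'}}}"
    let ?R = "{(a, b). {a, b} \<in> T - {{x, y}}}"
    have pull: "z' \<in> h ` V \<and> (x, ?g z') \<in> ?R\<^sup>*" if "(x', z') \<in> ?R'\<^sup>*" for z'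
      using that
    proof (induction rule: rtrancl_induct)
      case base then show ?case using x eV gh by auto
    next
      case (step y1 z1)
      from step(2) obtain e2 where e2: "e2 \<in> T" "h ` e2 = {y1, z1}" "h ` e2 \<noteq> {x', y'}" by auto
      have e2V: "e2 \<subseteq> V" using TV e2(1) .
      have z1: "z1 \<in> h ` V" using e2(2) e2V by auto
      have "?g ` h ` e2 = e2" using inv_into_image_cancel[OF inj e2V] .
      then have e2eq: "e2 = {?g y1, ?g z1}" using e2(2) by simp
      have "e2 \<noteq> {x, y}" using e2(3) exy e(2) by auto
      then have st: "(?g y1, ?g z1) \<in> ?R" using e2eq e2(1) by auto
      have "(x, ?g y1) \<in> ?R\<^sup>*" using step(3) by blast
      then have "(x, ?g z1) \<in> ?R\<^sup>*" using st by (rule rtrancl_into_rtrancl)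
      then show ?case using z1 by simp
    qed
    show "(x', y') \<notin> ?R'\<^sup>*"
    proof
      assume "(x', y') \<in> ?R'\<^sup>*"
      then have "(x, ?g y') \<in> ?R\<^sup>*" using pull by blast
      then have "(x, y) \<in> ?R\<^sup>*" using y gh eV by auto
      moreover have "(x, y) \<notin> ?R\<^sup>*" using acyc e(1) exy xy unfolding acyclic_edges_def by blast
      ultimately show False by contradiction
    qed
  qed
  show ?thesis unfolding spanning_tree_def using TE c2 a2 by blast
qed

lemma tau_iso:
  assumes inj: "inj_on h V" and EV: "\<forall>e\<in>E. e \<subseteq> V"
  shows "num_spanning_trees (h ` V) ((`) h ` E) = num_spanning_trees V E"
proof -
  let ?g = "inv_into V h"
  have injg: "inj_on ?g (h ` V)" by (rule inj_on_inv_into) simp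
  have gV: "?g ` h ` V = V" using inv_into_image_cancel[OF inj] by simp
  have gE: "(`) ?g ` (`) h ` E = E"
  proof -
    have "(`) ?g ` (`) h ` E = (\<lambda>e. ?g ` h ` e) ` E" by (simp add: image_image)
    also have "\<dots> = (\<lambda>e. e) ` E" using inv_into_image_cancel[OF inj] EV by (intro image_cong) auto
    finally show ?thesis by simp
  qed
  have EV': "\<forall>e\<in>(`) h ` E. e \<subseteq> h ` V" using EV by auto
  have "bij_betw ((`) ((`) h)) {T. spanning_tree V E T} {T. spanning_tree (h ` V) ((`) h ` E) T}"
  proof (rule bij_betw_byWitness[where f' = "(`) ((`) ?g)"])
    show "\<forall>T\<in>{T. spanning_tree V E T}. (`) ((`) ?g) ((`) ((`) h) T) = T"
    proof
      fix T assume "T \<in> {T. spanning_tree V E T}"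
      then have "\<forall>e\<in>T. e \<subseteq> V" using EV unfolding spanning_tree_def by auto
      then have "(\<lambda>e. ?g ` h ` e) ` T = (\<lambda>e. e) ` T" using inv_into_image_cancel[OF inj]
        by (intro image_cong) auto
      then show "(`) ((`) ?g) ((`) ((`) h) T) = T" by (simp add: image_image)
    qed
    show "\<forall>T\<in>{T. spanning_tree (h ` V) ((`) h ` E) T}. (`) ((`) h) ((`) ((`) ?g) T) = T"
    proof
      fix T assume "T \<in> {T. spanning_tree (h ` V) ((`) h ` E) T}"
      then have "T \<subseteq> (`) h ` E" unfolding spanning_tree_def by auto
      then have "\<forall>e\<in>T. e \<subseteq> h ` V" using EV' by blast
      then have "(\<lambda>e. h ` ?g ` e) ` T = (\<lambda>e. e) ` T"
        using image_inv_into_cancel[of h V "h ` V"] by (intro image_cong) auto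
      then show "(`) ((`) h) ((`) ((`) ?g) T) = T" by (simp add: image_image)
    qed
    show "(`) ((`) h) ` {T. spanning_tree V E T} \<subseteq> {T. spanning_tree (h ` V) ((`) h ` E) T}"
      using st_image[OF inj EV] by auto
    show "(`) ((`) ?g) ` {T. spanning_tree (h ` V) ((`) h ` E) T} \<subseteq> {T. spanning_tree V E T}"
      using st_image[OF injg EV'] gV gE by auto
  qed
  then show ?thesis unfolding num_spanning_trees_def by (simp add: bij_betw_same_card)
qed



definition AF :: "nat \<Rightarrow> (nat \<Rightarrow> nat \<Rightarrow> bool) \<Rightarrow> (nat \<Rightarrow> nat) set" where
 "AF n adj = {f. (\<forall>v. v \<ge> n \<longrightarrow> f v = v) \<and> (\<forall>v<n. f v < n \<and> (f v = v \<or> adj v (f v)))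
    \<and> (\<forall>v<n. \<exists>k. f ((f^^k) v) = (f^^k) v)}"

definition lapx :: "nat \<Rightarrow> (nat \<Rightarrow> nat \<Rightarrow> bool) \<Rightarrow> 'a::comm_ring_1 \<Rightarrow> 'a mat" where
 "lapx n adj x = mat n n (\<lambda>(i,j). if i = j then x + of_nat (card {u. u < n \<and> u \<noteq> i \<and> adj i u})
     else if adj i j then -1 else 0)"

definition rowv :: "nat \<Rightarrow> (nat \<Rightarrow> nat \<Rightarrow> bool) \<Rightarrow> 'a::comm_ring_1 \<Rightarrow> nat \<Rightarrow> nat \<Rightarrow> 'a vec" where
 "rowv n adj x i u = vec n (\<lambda>j. if u = i then (if j = i then x else 0)
    else if adj i u then (if j = i then 1 else if j = u then -1 else 0) else 0)"

lemma chooseB_entry: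
  assumes "i < n" "j < n" "f i = i \<or> adj i (f i)"
  shows "mat\<^sub>r n n (\<lambda>i. rowv n adj x i (f i)) $$ (i, j) =
    (if f i = i then (if j = i then x else 0) else (if j = i then 1 else if j = f i then -1 else 0))"
  using assms by (auto simp: rowv_def)

lemma det_acyc:
  fixes x :: "'a::comm_ring_1"
  assumes fn: "\<forall>i<n. f i < n" and fadj: "\<forall>i<n. f i = i \<or> adj i (f i)"
    and acyc: "\<forall>v<n. \<exists>k. f ((f^^k) v) = (f^^k) v"
  shows "det (mat\<^sub>r n n (\<lambda>i. rowv n adj x i (f i))) = x ^ card {v. v < n \<and> f v = v}"
proof -
  let ?B = "mat\<^sub>r n n (\<lambda>i. rowv n adj x i (f i))"
  let ?P = "{p. p permutes {0..<n}}"
  have Bij: "?B $$ (i, j) = (if f i = i then (if j = i then x else 0) else (if j = i then 1 else if j = f i then -1 else 0))"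
    if "i < n" "j < n" for i j by (rule chooseB_entry) (use fadj that in auto)
  have zero: "(\<Prod>i=0..<n. ?B $$ (i, p i)) = 0" if p: "p permutes {0..<n}" "p \<noteq> id" for p
  proof (rule prod_zero)
    show "finite {0..<n}" by simp
    show "\<exists>i\<in>{0..<n}. ?B $$ (i, p i) = 0"
    proof (rule ccontr)
      assume "\<not> ?thesis"
      then have nz: "?B $$ (i, p i) \<noteq> 0" if "i < n" for i using that by auto
      have pin: "p i < n" if "i < n" for i using permutes_in_image[OF p(1)] that by auto
      have pprop: "p i = i \<or> (f i \<noteq> i \<and> p i = f i)" if "i < n" for i
        using nz[OF that] Bij[OF that pin[OF that]] by (auto split: if_splits)
      obtain i0 where i0: "p i0 \<noteq> i0" using p(2) by (metis eq_id_iff)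
      have i0n: "i0 < n" using i0 permutes_not_in[OF p(1)] by fastforce
      have injp: "inj p" using permutes_inj[OF p(1)] .
      have ind: "(f^^k) i0 < n \<and> p ((f^^k) i0) \<noteq> (f^^k) i0" for k
      proof (induction k)
        case 0 then show ?case using i0 i0n by simp
      next
        case (Suc k)
        let ?w = "(f^^k) i0"
        have w: "?w < n" "p ?w \<noteq> ?w" using Suc by auto
        then have pw: "p ?w = f ?w" "f ?w \<noteq> ?w" using pprop[OF w(1)] by auto
        have fw: "f ?w < n" using fn w(1) by auto
        have "p (f ?w) \<noteq> f ?w"
        proof
          assume "p (f ?w) = f ?w"
          then have "p (f ?w) = p ?w" using pw by simp
          then have "f ?w = ?w" using injp by (simp add: inj_eq)
          with pw show False by simp
        qed
        then show ?case using fw by simp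
      qed
      obtain k where k: "f ((f^^k) i0) = (f^^k) i0" using acyc i0n by blast
      have "p ((f^^k) i0) = f ((f^^k) i0) \<and> f ((f^^k) i0) \<noteq> (f^^k) i0"
        using pprop ind[of k] by blast
      with k show False by simp
    qed
  qed
  have "det ?B = (\<Sum>p\<in>?P. signof p * (\<Prod>i=0..<n. ?B $$ (i, p i)))"
    by (rule det_def') simp
  also have "\<dots> = signof (id::nat\<Rightarrow>nat) * (\<Prod>i=0..<n. ?B $$ (i, id i)) +
      (\<Sum>p\<in>?P - {id}. signof p * (\<Prod>i=0..<n. ?B $$ (i, p i)))"
    by (rule sum.remove) (auto simp: finite_permutations permutes_id)
  also have "(\<Sum>p\<in>?P - {id}. signof p * (\<Prod>i=0..<n. ?B $$ (i, p i))) = 0"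
    using zero by (intro sum.neutral) auto
  also have "(\<Prod>i=0..<n. ?B $$ (i, id i)) = (\<Prod>i=0..<n. if f i = i then x else 1)"
    using Bij by (intro prod.cong) auto
  also have "\<dots> = (\<Prod>i\<in>{i \<in> {0..<n}. f i = i}. x)"
    by (rule prod.inter_filter[symmetric]) simp
  also have "\<dots> = x ^ card {v. v < n \<and> f v = v}"
  proof -
    have "{i \<in> {0..<n}. f i = i} = {v. v < n \<and> f v = v}" by auto
    then show ?thesis by simp
  qed
  finally show ?thesis by (simp add: sign_id)
qed

lemma det_cyc:
  fixes x :: "'a::idom"
  assumes fn: "\<forall>i<n. f i < n" and fadj: "\<forall>i<n. f i = i \<or> adj i (f i)"
    and w: "w < n" and cyc: "\<forall>k. f ((f^^k) w) \<noteq> (f^^k) w"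
  shows "det (mat\<^sub>r n n (\<lambda>i. rowv n adj x i (f i))) = 0"
proof -
  let ?B = "mat\<^sub>r n n (\<lambda>i. rowv n adj x i (f i))"
  have Bij: "?B $$ (i, j) = (if f i = i then (if j = i then x else 0) else (if j = i then 1 else if j = f i then -1 else 0))"
    if "i < n" "j < n" for i j by (rule chooseB_entry) (use fadj that in auto)
  define Z where "Z = {v. v < n \<and> (\<forall>k. f ((f^^k) v) \<noteq> (f^^k) v)}"
  define z where "z = vec n (\<lambda>i. if i \<in> Z then (1::'a) else 0)"
  have zc: "z \<in> carrier_vec n" unfolding z_def by simp
  have wZ: "w \<in> Z" using w cyc unfolding Z_def by simp
  have znz: "z \<noteq> 0\<^sub>v n"
  proof
    assume "z = 0\<^sub>v n"
    then have "z $ w = 0" using w by simp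
    then show False using w wZ unfolding z_def by simp
  qed
  have Zi: "i \<in> Z \<longleftrightarrow> f i \<in> Z" if "i < n" "f i \<noteq> i" for i
  proof
    assume "i \<in> Z"
    then have "\<forall>k. f ((f^^Suc k) i) \<noteq> (f^^Suc k) i" unfolding Z_def by blast
    then have "\<forall>k. f ((f^^k) (f i)) \<noteq> (f^^k) (f i)"
      by (simp only: funpow_Suc_right comp_apply) simp
    then show "f i \<in> Z" using fn that unfolding Z_def by simp
  next
    assume fi: "f i \<in> Z"
    have "f ((f^^k) i) \<noteq> (f^^k) i" for k
    proof (cases k)
      case 0 then show ?thesis using that by simp
    next
      case (Suc k')
      have "(f^^k) i = (f^^k') (f i)" using Suc by (simp only: funpow_Suc_right comp_apply)
      then show ?thesis using fi unfolding Z_def by simp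
    qed
    then show "i \<in> Z" using that unfolding Z_def by simp
  qed
  have "?B *\<^sub>v z = 0\<^sub>v n"
  proof (rule eq_vecI)
    fix i assume "i < dim_vec (0\<^sub>v n :: 'a vec)"
    then have i: "i < n" by simp
    have "(?B *\<^sub>v z) $ i = (\<Sum>j = 0..<n. ?B $$ (i, j) * z $ j)"
      using i zc by (simp add: scalar_prod_def)
    also have "\<dots> = 0"
    proof (cases "f i = i")
      case True
      then have "i \<notin> Z" unfolding Z_def by (auto intro: exI[of _ 0])
      have "(\<Sum>j = 0..<n. ?B $$ (i, j) * z $ j) = (\<Sum>j = 0..<n. if j = i then x * z $ i else 0)"
        using Bij[OF i] True by (intro sum.cong) auto
      also have "\<dots> = x * z $ i" using i by simp
      also have "\<dots> = 0" using \<open>i \<notin> Z\<close> i unfolding z_def by simp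
      finally show ?thesis .
    next
      case False
      have fi: "f i < n" using fn i by simp
      have "(\<Sum>j = 0..<n. ?B $$ (i, j) * z $ j) =
          (\<Sum>j = 0..<n. (if j = i then z $ i else 0) + (if j = f i then - z $ f i else 0))"
        using Bij[OF i] False by (intro sum.cong) auto
      also have "\<dots> = z $ i - z $ f i" using i fi by (simp add: sum.distrib)
      also have "\<dots> = 0" using Zi[OF i False] i fi unfolding z_def by simp
      finally show ?thesis .
    qed
    finally show "(?B *\<^sub>v z) $ i = 0\<^sub>v n $ i" using i by simp
  qed (simp)
  then show ?thesis using det_0_iff_vec_prod_zero[of ?B n] zc znz by auto
qed

lemma det_badrow:
  fixes x :: "'a::comm_ring_1"
  assumes c: "c < n" "f c \<noteq> c" "\<not> adj c (f c)"
  shows "det (mat\<^sub>r n n (\<lambda>i. rowv n adj x i (f i))) = 0"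
proof -
  have z: "rowv n adj x c (f c) = 0\<^sub>v n" using c unfolding rowv_def by (intro eq_vecI) auto
  have "mat\<^sub>r n n (\<lambda>i. rowv n adj x i (f i)) = mat\<^sub>r n n (\<lambda>i. if i = c then 0\<^sub>v n else rowv n adj x i (f i))"
    using z by (intro eq_matI) auto
  also have "det \<dots> = 0" by (rule det_row_0) (auto simp: c rowv_def)
  finally show ?thesis .
qed

lemma rowsum:
  fixes x :: "'a::comm_ring_1"
  assumes i: "i < n" and j: "j < n"
  shows "(\<Sum>u\<in>{0..<n}. rowv n adj x i u $ j) =
    (if i = j then x + of_nat (card {u. u < n \<and> u \<noteq> i \<and> adj i u}) else if adj i j then -1 else 0)"
proof -
  let ?S = "{u. u < n \<and> u \<noteq> i \<and> adj i u}"
  let ?g = "\<lambda>u. if j = i then (1::'a) else if j = u then -1 else 0"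
  have "(\<Sum>u\<in>{0..<n}. rowv n adj x i u $ j) =
      (\<Sum>u\<in>{0..<n}. (if u = i then (if j = i then x else 0) else if adj i u then ?g u else 0))"
    using j unfolding rowv_def by (intro sum.cong) auto
  also have "\<dots> = (if j = i then x else 0) + (\<Sum>u\<in>{0..<n} - {i}. (if u = i then (if j = i then x else 0) else if adj i u then ?g u else 0))"
    using i by (subst sum.remove[of _ i]) auto
  also have "(\<Sum>u\<in>{0..<n} - {i}. (if u = i then (if j = i then x else 0) else if adj i u then ?g u else 0))
      = (\<Sum>u\<in>{0..<n} - {i}. (if adj i u then ?g u else 0))"
    by (intro sum.cong) auto
  also have "\<dots> = (\<Sum>u\<in>{u \<in> {0..<n} - {i}. adj i u}. ?g u)"
    by (rule sum.inter_filter[symmetric]) simp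
  also have "{u \<in> {0..<n} - {i}. adj i u} = ?S" by auto
  finally have eq: "(\<Sum>u\<in>{0..<n}. rowv n adj x i u $ j) = (if j = i then x else 0) + (\<Sum>u\<in>?S. ?g u)" .
  show ?thesis
  proof (cases "i = j")
    case True
    then show ?thesis using eq by simp
  next
    case False
    then have "(\<Sum>u\<in>?S. ?g u) = (\<Sum>u\<in>?S. if j = u then -1 else 0)" by simp
    also have "\<dots> = (if j \<in> ?S then -1 else 0)" by (rule sum.delta') simp
    finally show ?thesis using eq False j by auto
  qed
qed

theorem matrix_tree:
  fixes x :: "'a::idom"
  shows "det (lapx n adj x) = (\<Sum>f\<in>AF n adj. x ^ card {v. v < n \<and> f v = v})"
proof -
  let ?F = "{f. (\<forall>i\<in>{0..<n}. f i \<in> {0..<n}) \<and> (\<forall>i. i \<notin> {0..<n} \<longrightarrow> f i = i)}"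
  have M: "lapx n adj x = mat\<^sub>r n n (\<lambda>i. finsum_vec TYPE('a) n (\<lambda>u. rowv n adj x i u) {0..<n})"
  proof (rule eq_matI)
    fix i j assume ij: "i < dim_row (mat\<^sub>r n n (\<lambda>i. finsum_vec TYPE('a) n (\<lambda>u. rowv n adj x i u) {0..<n}))"
      "j < dim_col (mat\<^sub>r n n (\<lambda>i. finsum_vec TYPE('a) n (\<lambda>u. rowv n adj x i u) {0..<n}))"
    then have i: "i < n" and j: "j < n" by auto
    have "mat\<^sub>r n n (\<lambda>i. finsum_vec TYPE('a) n (\<lambda>u. rowv n adj x i u) {0..<n}) $$ (i, j)
        = finsum_vec TYPE('a) n (\<lambda>u. rowv n adj x i u) {0..<n} $ j"
      using i j by simp
    also have "\<dots> = (\<Sum>u\<in>{0..<n}. rowv n adj x i u $ j)"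
      by (rule index_finsum_vec) (auto simp: j rowv_def)
    also have "\<dots> = lapx n adj x $$ (i, j)" unfolding rowsum[OF i j] lapx_def using i j by simp
    finally show "lapx n adj x $$ (i, j) = mat\<^sub>r n n (\<lambda>i. finsum_vec TYPE('a) n (\<lambda>u. rowv n adj x i u) {0..<n}) $$ (i, j)" by simp
  qed (auto simp: lapx_def)
  have "det (lapx n adj x) = (\<Sum>f\<in>?F. det (mat\<^sub>r n n (\<lambda>i. rowv n adj x i (f i))))"
    unfolding M by (rule det_linear_rows_sum) (auto simp: rowv_def)
  also have "\<dots> = (\<Sum>f\<in>?F. if f \<in> AF n adj then x ^ card {v. v < n \<and> f v = v} else 0)"
  proof (rule sum.cong[OF refl])
    fix f assume fF: "f \<in> ?F"
    then have fn: "\<forall>i<n. f i < n" and fo: "\<forall>i. i \<ge> n \<longrightarrow> f i = i" by auto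
    show "det (mat\<^sub>r n n (\<lambda>i. rowv n adj x i (f i))) = (if f \<in> AF n adj then x ^ card {v. v < n \<and> f v = v} else 0)"
    proof (cases "\<forall>i<n. f i = i \<or> adj i (f i)")
      case False
      then obtain i0 where i0: "i0 < n" "f i0 \<noteq> i0" "\<not> adj i0 (f i0)" by blast
      then have "f \<notin> AF n adj" unfolding AF_def by auto
      then show ?thesis using det_badrow[where c=i0 and n=n and f=f and adj=adj and x=x] i0 by simp
    next
      case True
      note fadj = True
      show ?thesis
      proof (cases "\<forall>v<n. \<exists>k. f ((f^^k) v) = (f^^k) v")
        case True
        then have "f \<in> AF n adj" unfolding AF_def using fn fo fadj by auto
        then show ?thesis using det_acyc[where n=n and f=f and adj=adj and x=x] fn fadj True by simp
      next
        case False
        then obtain v0 where v0: "v0 < n" "\<forall>k. f ((f^^k) v0) \<noteq> (f^^k) v0" by blast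
        then have "f \<notin> AF n adj" unfolding AF_def by auto
        then show ?thesis using det_cyc[where n=n and f=f and adj=adj and x=x and w=v0] fn fadj v0 by simp
      qed
    qed
  qed
  also have "\<dots> = (\<Sum>f\<in>?F \<inter> AF n adj. x ^ card {v. v < n \<and> f v = v})"
    by (rule sum.inter_restrict[symmetric]) (rule finite_bounded_functions; simp)
  also have "?F \<inter> AF n adj = AF n adj" unfolding AF_def by auto
  finally show ?thesis .
qed



definition bsz :: "nat \<Rightarrow> (nat \<Rightarrow> nat) \<Rightarrow> nat \<Rightarrow> nat" where
  "bsz N blk b = card {u. u < N \<and> blk u = b}"

definition bmat :: "nat \<Rightarrow> (nat \<Rightarrow> nat) \<Rightarrow> 'a::comm_ring_1 \<Rightarrow> 'a mat" where
  "bmat N blk x = mat N N (\<lambda>(i,j). if i = j then x + of_nat (N - bsz N blk (blk i))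
      else if blk i \<noteq> blk j then -1 else 0)"

lemma bsz_le: "bsz N blk b \<le> N"
proof -
  have "card {u. u < N \<and> blk u = b} \<le> card {0..<N}" by (rule card_mono) auto
  then show ?thesis unfolding bsz_def by simp
qed

lemma card_other: "card {w. w < N \<and> blk w \<noteq> b} = N - bsz N blk b"
proof -
  have "{0..<N} = {w. w < N \<and> blk w \<noteq> b} \<union> {u. u < N \<and> blk u = b}" by auto
  moreover have "{w. w < N \<and> blk w \<noteq> b} \<inter> {u. u < N \<and> blk u = b} = {}" by auto
  ultimately have "N = card {w. w < N \<and> blk w \<noteq> b} + card {u. u < N \<and> blk u = b}"
    by (metis card_Un_disjoint card_atLeastLessThan diff_zero finite_Un finite_atLeastLessThan)
  then show ?thesis unfolding bsz_def by simp
qed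

lemma bmat_sum:
  fixes x :: "'a::comm_ring_1"
  assumes z: "z < N" and A: "A \<subseteq> {0..<N}"
  shows "(\<Sum>w\<in>A. bmat N blk x $$ (z, w)) =
    (if z \<in> A then x + of_nat (N - bsz N blk (blk z)) else 0) - of_nat (card {w \<in> A. blk w \<noteq> blk z})"
proof -
  let ?D = "x + of_nat (N - bsz N blk (blk z))"
  have finA: "finite A" using A finite_subset by blast
  have "(\<Sum>w\<in>A. bmat N blk x $$ (z, w)) = (\<Sum>w\<in>A. (if w = z then ?D else 0) + (if blk w \<noteq> blk z then -1 else 0))"
    using A z unfolding bmat_def by (intro sum.cong) auto
  also have "\<dots> = (\<Sum>w\<in>A. if w = z then ?D else 0) + (\<Sum>w\<in>A. if blk w \<noteq> blk z then -1 else 0)"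
    by (rule sum.distrib)
  also have "(\<Sum>w\<in>A. if w = z then ?D else 0) = (if z \<in> A then ?D else 0)"
    using finA by (simp add: sum.delta)
  also have "(\<Sum>w\<in>A. if blk w \<noteq> blk z then (-1::'a) else 0) = (\<Sum>w\<in>{w \<in> A. blk w \<noteq> blk z}. -1)"
    using finA by (rule sum.inter_filter[symmetric])
  also have "\<dots> = - of_nat (card {w \<in> A. blk w \<noteq> blk z})" by simp
  finally show ?thesis by simp
qed

lemma bmat_det:
  fixes x :: "'a::comm_ring_1"
  assumes kpos: "0 < k" and kN: "k \<le> N" and rep: "\<forall>i<k. blk i = i" and rng: "\<forall>i<N. blk i < k"
  shows "det (bmat N blk x) = x * (x + of_nat N) ^ (k - 1) * (\<Prod>b\<in>{0..<k}. (x + of_nat (N - bsz N blk b)) ^ (bsz N blk b - 1))"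
proof -
  let ?M = "bmat N blk x"
  let ?a = "bsz N blk"
  define rp where "rp i = (if i < k then 0 else blk i)" for i
  define P :: "'a mat" where "P = mat N N (\<lambda>(i,j). if i = j then 1 else if i \<noteq> 0 \<and> j = rp i then -1 else 0)"
  define Q :: "'a mat" where "Q = mat N N (\<lambda>(w,c). if c = 0 then 1 else if c < k then (if blk w = c then 1 else 0) else (if w = c then 1 else 0))"
  have Mc: "?M \<in> carrier_mat N N" unfolding bmat_def by simp
  have Pc: "P \<in> carrier_mat N N" unfolding P_def by simp
  have Qc: "Q \<in> carrier_mat N N" unfolding Q_def by simp
  have rp_lt: "rp i < i" if "i \<noteq> 0" "i < N" for i
  proof (cases "i < k")
    case True then show ?thesis using that unfolding rp_def by simp
  next
    case False then have "blk i < k" using rng that by simp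
    then show ?thesis using False unfolding rp_def by simp
  qed
  have rpN: "rp i < N" if "i < N" for i using that kpos kN rng unfolding rp_def by auto
  have Mij: "?M $$ (i, j) = (if i = j then x + of_nat (N - ?a (blk i)) else if blk i \<noteq> blk j then -1 else 0)"
    if "i < N" "j < N" for i j using that unfolding bmat_def by simp
  have detP: "det P = 1"
  proof -
    have "det P = prod_list (diag_mat P)"
    proof (rule det_lower_triangular[OF _ Pc])
      fix i j assume "i < j" "j < N"
      then show "P $$ (i, j) = 0" unfolding P_def using rp_lt[of i] by (auto simp: rp_def)
    qed
    also have "\<dots> = 1" unfolding prod_list_diag_prod using Pc unfolding P_def by simp
    finally show ?thesis .
  qed
  have detQ: "det Q = 1"
  proof -
    have "det Q = prod_list (diag_mat Q)"
    proof (rule det_lower_triangular[OF _ Qc])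
      fix i j assume "i < j" "j < N"
      then show "Q $$ (i, j) = 0" unfolding Q_def using rep by auto
    qed
    also have "\<dots> = (\<Prod>i = 0..<N. (1::'a))" unfolding prod_list_diag_prod using Qc rep unfolding Q_def
      by (intro prod.cong) auto
    also have "\<dots> = 1" by simp
    finally show ?thesis .
  qed
  define T where "T = ?M * Q"
  have Tc: "T \<in> carrier_mat N N" unfolding T_def using Mc Qc by simp
  have Tent: "T $$ (z, c) = (\<Sum>w\<in>{0..<N}. ?M $$ (z, w) * Q $$ (w, c))" if "z < N" "c < N" for z c
    unfolding T_def using that Mc Qc by (simp add: scalar_prod_def)
  have T0: "T $$ (z, 0) = x" if "z < N" for z
  proof -
    have "T $$ (z, 0) = (\<Sum>w\<in>{0..<N}. ?M $$ (z, w))" using Tent[OF that] that kpos kN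
      unfolding Q_def by simp
    also have "\<dots> = (x + of_nat (N - ?a (blk z))) - of_nat (N - ?a (blk z))"
      using bmat_sum[where blk=blk and x=x and A="{0..<N}", OF that] that card_other[of N blk "blk z"]
      by simp
    also have "\<dots> = x" by simp
    finally show ?thesis .
  qed
  have Tblk: "T $$ (z, c) = (if blk z = c then x + of_nat (N - ?a c) else - of_nat (?a c))"
    if "z < N" "0 < c" "c < k" for z c
  proof -
    have cN: "c < N" using that kN by simp
    have "T $$ (z, c) = (\<Sum>w\<in>{0..<N}. ?M $$ (z, w) * Q $$ (w, c))" using Tent[OF that(1) cN] .
    also have "\<dots> = (\<Sum>w\<in>{0..<N}. if blk w = c then ?M $$ (z, w) else 0)"
      using that cN unfolding Q_def by (intro sum.cong) auto
    also have "\<dots> = (\<Sum>w\<in>{w \<in> {0..<N}. blk w = c}. ?M $$ (z, w))"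
      by (rule sum.inter_filter[symmetric]) simp
    also have "\<dots> = (if blk z = c then x + of_nat (N - ?a c) else - of_nat (?a c))"
    proof (cases "blk z = c")
      case True
      have sub: "{w \<in> {0..<N}. blk w = c} \<subseteq> {0..<N}" by auto
      have "{w \<in> {w \<in> {0..<N}. blk w = c}. blk w \<noteq> blk z} = {}" using True by auto
      then show ?thesis using bmat_sum[where blk=blk and x=x, OF that(1) sub] True that(1) by simp
    next
      case False
      have sub: "{w \<in> {0..<N}. blk w = c} \<subseteq> {0..<N}" by auto
      have "{w \<in> {w \<in> {0..<N}. blk w = c}. blk w \<noteq> blk z} = {u. u < N \<and> blk u = c}" using False by auto
      then show ?thesis using bmat_sum[where blk=blk and x=x, OF that(1) sub] False that(1)
        unfolding bsz_def by simp
    qed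
    finally show ?thesis .
  qed
  have Tsing: "T $$ (z, c) = ?M $$ (z, c)" if "z < N" "k \<le> c" "c < N" for z c
  proof -
    have "T $$ (z, c) = (\<Sum>w\<in>{0..<N}. ?M $$ (z, w) * Q $$ (w, c))" using Tent[OF that(1) that(3)] .
    also have "\<dots> = (\<Sum>w\<in>{0..<N}. if w = c then ?M $$ (z, c) else 0)"
      using that kpos unfolding Q_def by (intro sum.cong) auto
    also have "\<dots> = ?M $$ (z, c)" using that by simp
    finally show ?thesis .
  qed
  define R where "R = P * T"
  have Rc: "R \<in> carrier_mat N N" unfolding R_def using Pc Tc by simp
  have Rent: "R $$ (i, j) = T $$ (i, j) - (if i \<noteq> 0 then T $$ (rp i, j) else 0)" if "i < N" "j < N" for i j
  proof -
    have "R $$ (i, j) = (\<Sum>l\<in>{0..<N}. P $$ (i, l) * T $$ (l, j))"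
      unfolding R_def using that Pc Tc by (simp add: scalar_prod_def)
    also have "\<dots> = (\<Sum>l\<in>{0..<N}. (if l = i then T $$ (i, j) else 0) + (if l = rp i then (if i \<noteq> 0 then - T $$ (rp i, j) else 0) else 0))"
      using that rp_lt[of i] unfolding P_def by (intro sum.cong) auto
    also have "\<dots> = T $$ (i, j) - (if i \<noteq> 0 then T $$ (rp i, j) else 0)"
      using that rpN[OF that(1)] by (simp add: sum.distrib)
    finally show ?thesis .
  qed
  have detR: "det R = det ?M"
    unfolding R_def T_def using Pc Mc Qc detP detQ by (simp add: det_mult)
  have ut: "R $$ (i, j) = 0" if "j < i" "i < N" for i j
  proof -
    have jN: "j < N" using that by simp
    have i0: "i \<noteq> 0" using that by simp
    have rpi: "rp i < N" using rpN that by simp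
    have blkrp: "blk (rp i) = (if i < k then 0 else blk i)" unfolding rp_def using rep kpos rng that by auto
    show ?thesis
    proof (cases "j = 0")
      case True then show ?thesis using Rent[OF that(2) jN] T0 that rpi i0 by simp
    next
      case False
      show ?thesis
      proof (cases "j < k")
        case True
        have "blk i = j \<longleftrightarrow> blk (rp i) = j"
          using blkrp rep that True False by auto
        then show ?thesis using Rent[OF that(2) jN] Tblk[OF that(2) _ True] Tblk[OF rpi _ True] False i0 by simp
      next
        case False
        then have ik: "\<not> i < k" using that by simp
        then have "rp i = blk i" unfolding rp_def by simp
        moreover have "blk i < k" using rng that by simp
        ultimately show ?thesis using Rent[OF that(2) jN] Tsing[OF that(2) _ jN] Tsing[OF rpi _ jN] False i0 that
          Mij[OF that(2) jN] Mij[OF rpi jN] blkrp ik by auto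
      qed
    qed
  qed
  have diag: "R $$ (i, i) = (if i = 0 then x else if i < k then x + of_nat N else x + of_nat (N - ?a (blk i)))"
    if "i < N" for i
  proof -
    have rpi: "rp i < N" using rpN that by simp
    show ?thesis
    proof (cases "i = 0")
      case True then show ?thesis using Rent[OF that that] T0 that by simp
    next
      case False
      show ?thesis
      proof (cases "i < k")
        case True
        then have "rp i = 0" unfolding rp_def by simp
        moreover have "blk 0 = 0" "blk i = i" using rep True kpos by auto
        ultimately show ?thesis using Rent[OF that that] Tblk[OF that _ True] Tblk[of 0 i] True False kpos kN
          bsz_le[of N blk i] by (simp add: of_nat_diff)
      next
        case ik: False
        then have "rp i = blk i" unfolding rp_def by simp
        moreover have "blk i < k" using rng that by simp
        moreover have "blk (blk i) = blk i" using rep \<open>blk i < k\<close> by simp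
        moreover have "blk i \<noteq> i" using \<open>blk i < k\<close> ik by simp
        ultimately show ?thesis using Rent[OF that that] Tsing[OF that _ that] Tsing[OF rpi _ that] False ik
          Mij[OF that that] Mij[OF rpi that] by auto
      qed
    qed
  qed
  have "det R = prod_list (diag_mat R)"
    by (rule det_upper_triangular[OF _ Rc]) (use ut Rc in \<open>auto simp: upper_triangular_def\<close>)
  also have "\<dots> = (\<Prod>i\<in>{0..<N}. R $$ (i, i))" unfolding prod_list_diag_prod using Rc by simp
  also have "\<dots> = (\<Prod>i\<in>{0..<N}. (if i = 0 then x else if i < k then x + of_nat N else x + of_nat (N - ?a (blk i))))"
    using diag by (intro prod.cong) auto
  finally have dR: "det R = (\<Prod>i\<in>{0..<N}. (if i = 0 then x else if i < k then x + of_nat N else x + of_nat (N - ?a (blk i))))" .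
  let ?h = "\<lambda>i. (if i = 0 then x else if i < k then x + of_nat N else x + of_nat (N - ?a (blk i)))"
  let ?g = "\<lambda>b. x + of_nat (N - ?a b)"
  have p1: "(\<Prod>i\<in>{0..<k}. ?h i) = x * (x + of_nat N) ^ (k - 1)"
  proof -
    have "(\<Prod>i\<in>{0..<k}. ?h i) = ?h 0 * (\<Prod>i\<in>{Suc 0..<k}. ?h i)"
      by (rule prod.atLeast_Suc_lessThan) (use kpos in simp)
    also have "(\<Prod>i\<in>{Suc 0..<k}. ?h i) = (\<Prod>i\<in>{Suc 0..<k}. x + of_nat N)"
      by (intro prod.cong) auto
    also have "\<dots> = (x + of_nat N) ^ (k - 1)" by simp
    finally show ?thesis by simp
  qed
  have p2: "(\<Prod>i\<in>{k..<N}. ?h i) = (\<Prod>b\<in>{0..<k}. ?g b ^ (?a b - 1))"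
  proof -
    have "(\<Prod>i\<in>{k..<N}. ?h i) = (\<Prod>i\<in>{k..<N}. ?g (blk i))"
      using kpos by (intro prod.cong) auto
    also have "\<dots> = (\<Prod>b\<in>{0..<k}. \<Prod>i\<in>{i. i \<in> {k..<N} \<and> blk i = b}. ?g (blk i))"
      by (rule prod.group[symmetric]) (use rng in auto)
    also have "\<dots> = (\<Prod>b\<in>{0..<k}. ?g b ^ (?a b - 1))"
    proof (rule prod.cong[OF refl])
      fix b assume b: "b \<in> {0..<k}"
      have "(\<Prod>i\<in>{i. i \<in> {k..<N} \<and> blk i = b}. ?g (blk i)) = (\<Prod>i\<in>{i. i \<in> {k..<N} \<and> blk i = b}. ?g b)"
        by (intro prod.cong) auto
      also have "\<dots> = ?g b ^ card {i. i \<in> {k..<N} \<and> blk i = b}" by simp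
      also have "card {i. i \<in> {k..<N} \<and> blk i = b} = ?a b - 1"
      proof -
        have seteq: "{u. u < N \<and> blk u = b} = insert b {i. i \<in> {k..<N} \<and> blk i = b}"
          using b rep kN by (auto; metis not_le)
        have nb: "b \<notin> {i. i \<in> {k..<N} \<and> blk i = b}" using b by auto
        have fin: "finite {i. i \<in> {k..<N} \<and> blk i = b}"
          by (rule finite_subset[of _ "{k..<N}"]) auto
        have c: "card (insert b {i. i \<in> {k..<N} \<and> blk i = b}) = Suc (card {i. i \<in> {k..<N} \<and> blk i = b})"
          using card_insert_disjoint[OF fin nb] .
        have "?a b = Suc (card {i. i \<in> {k..<N} \<and> blk i = b})"
          unfolding bsz_def seteq c ..
        then show ?thesis by simp
      qed
      finally show "(\<Prod>i\<in>{i. i \<in> {k..<N} \<and> blk i = b}. ?g (blk i)) = ?g b ^ (?a b - 1)" .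
    qed
    finally show ?thesis .
  qed
  have "det ?M = det R" using detR by simp
  also have "\<dots> = (\<Prod>i\<in>{0..<N}. ?h i)" using dR .
  also have "\<dots> = (\<Prod>i\<in>{0..<k}. ?h i) * (\<Prod>i\<in>{k..<N}. ?h i)"
    by (rule prod.atLeastLessThan_concat[symmetric]) (use kN in auto)
  also have "\<dots> = x * (x + of_nat N) ^ (k - 1) * (\<Prod>b\<in>{0..<k}. ?g b ^ (?a b - 1))"
    unfolding p1 p2 ..
  finally show ?thesis .
qed



definition gmap :: "nat \<Rightarrow> nat \<Rightarrow> nat \<Rightarrow> (nat + nat) + (nat + nat) \<Rightarrow> nat" where
  "gmap m n p v = (case v of
      Inl (Inl i) \<Rightarrow> (if i = 0 then 0 else 3 + i)
    | Inl (Inr j) \<Rightarrow> (if j = 0 then 1 else 2 + m + j)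
    | Inr (Inl i) \<Rightarrow> (if i = 0 then 2 else 1 + m + n + i)
    | Inr (Inr j) \<Rightarrow> (if j = 0 then 3 else m + n + p + j))"

definition ginv :: "nat \<Rightarrow> nat \<Rightarrow> nat \<Rightarrow> nat \<Rightarrow> (nat + nat) + (nat + nat)" where
  "ginv m n p i = (if i = 0 then Inl (Inl 0) else if i = 1 then Inl (Inr 0)
     else if i = 2 then Inr (Inl 0) else if i = 3 then Inr (Inr 0)
     else if i < 3 + m then Inl (Inl (i - 3)) else if i < 2 + m + n then Inl (Inr (i - 2 - m))
     else if i < 1 + m + n + p then Inr (Inl (i - 1 - m - n)) else Inr (Inr (i - m - n - p)))"

definition blk4 :: "nat \<Rightarrow> nat \<Rightarrow> nat \<Rightarrow> nat \<Rightarrow> nat" where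
  "blk4 m n p i = (if i < 4 then i else if i < 3 + m then 0 else if i < 2 + m + n then 1
     else if i < 1 + m + n + p then 2 else 3)"

definition part4 :: "(nat + nat) + (nat + nat) \<Rightarrow> nat" where
  "part4 v = (case v of Inl (Inl _) \<Rightarrow> 0 | Inl (Inr _) \<Rightarrow> 1 | Inr (Inl _) \<Rightarrow> 2 | Inr (Inr _) \<Rightarrow> 3)"

lemma Vf_iff:
  "v \<in> join_V (Kbip_V m n) (Kbip_V p q) \<longleftrightarrow>
    (case v of Inl (Inl i) \<Rightarrow> i < m | Inl (Inr j) \<Rightarrow> j < n | Inr (Inl i) \<Rightarrow> i < p | Inr (Inr j) \<Rightarrow> j < q)"
  unfolding join_V_def Kbip_V_def by (auto split: sum.splits)

lemma gmap_lt:
  assumes "v \<in> join_V (Kbip_V m n) (Kbip_V p q)" "0 < m" "0 < n" "0 < p" "0 < q"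
  shows "gmap m n p v < m + n + p + q"
  using assms unfolding Vf_iff gmap_def by (auto split: sum.splits)

lemma gmap_blk:
  assumes "v \<in> join_V (Kbip_V m n) (Kbip_V p q)" "0 < m" "0 < n" "0 < p" "0 < q"
  shows "blk4 m n p (gmap m n p v) = part4 v"
  using assms unfolding Vf_iff gmap_def blk4_def part4_def by (auto split: sum.splits)

lemma ginv_in:
  assumes "i < m + n + p + q" "0 < m" "0 < n" "0 < p" "0 < q"
  shows "ginv m n p i \<in> join_V (Kbip_V m n) (Kbip_V p q)"
  using assms unfolding Vf_iff ginv_def by auto

lemma gmap_ginv:
  assumes "i < m + n + p + q" "0 < m" "0 < n" "0 < p" "0 < q"
  shows "gmap m n p (ginv m n p i) = i"
  using assms unfolding gmap_def ginv_def by auto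

lemma ginv_gmap:
  assumes "v \<in> join_V (Kbip_V m n) (Kbip_V p q)" "0 < m" "0 < n" "0 < p" "0 < q"
  shows "ginv m n p (gmap m n p v) = v"
  using assms unfolding Vf_iff gmap_def ginv_def by (auto split: sum.splits)

lemma part4_Inl: "part4 (Inl u) < 2" unfolding part4_def by (cases u) auto
lemma part4_Inr: "part4 (Inr u) \<ge> 2" unfolding part4_def by (cases u) auto

lemma Vf_Inl: "u \<in> Kbip_V m n \<Longrightarrow> Inl u \<in> join_V (Kbip_V m n) (Kbip_V p q)"
  unfolding join_V_def by simp
lemma Vf_Inr: "u \<in> Kbip_V p q \<Longrightarrow> Inr u \<in> join_V (Kbip_V m n) (Kbip_V p q)"
  unfolding join_V_def by simp

lemma Ef_sub:
  assumes "e \<in> join_E (Kbip_V m n) (Kbip_E m n) (Kbip_V p q) (Kbip_E p q)"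
  shows "\<exists>u v. e = {u, v} \<and> u \<in> join_V (Kbip_V m n) (Kbip_V p q) \<and> v \<in> join_V (Kbip_V m n) (Kbip_V p q)
     \<and> part4 u \<noteq> part4 v"
  using assms unfolding join_E_def Kbip_E_def
proof (elim UnE imageE CollectE exE conjE)
  fix e' i j assume "e = Inl ` e'" "e' = {Inl i, Inr j}" "i < m" "j < n"
  then show ?thesis unfolding Vf_iff part4_def by (intro exI[of _ "Inl (Inl i)"] exI[of _ "Inl (Inr j)"]) auto
next
  fix e' i j assume "e = Inr ` e'" "e' = {Inl i, Inr j}" "i < p" "j < q"
  then show ?thesis unfolding Vf_iff part4_def by (intro exI[of _ "Inr (Inl i)"] exI[of _ "Inr (Inr j)"]) auto
next
  fix u v assume H: "e = {Inl u, Inr v}" "u \<in> Kbip_V m n" "v \<in> Kbip_V p q"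
  have "part4 (Inl u) \<noteq> part4 (Inr v)" using part4_Inl[of u] part4_Inr[of v] by simp
  then show ?thesis using H Vf_Inl[OF H(2)] Vf_Inr[OF H(3)] by blast
qed

lemma E1: "i < m \<Longrightarrow> j < n \<Longrightarrow> {Inl (Inl i), Inl (Inr j)} \<in> join_E (Kbip_V m n) (Kbip_E m n) (Kbip_V p q) (Kbip_E p q)"
  unfolding join_E_def Kbip_E_def by (intro UnI1 image_eqI[of _ _ "{Inl i, Inr j}"]) auto
lemma E2: "i < p \<Longrightarrow> j < q \<Longrightarrow> {Inr (Inl i), Inr (Inr j)} \<in> join_E (Kbip_V m n) (Kbip_E m n) (Kbip_V p q) (Kbip_E p q)"
  unfolding join_E_def Kbip_E_def by (intro UnI1 UnI2 image_eqI[of _ _ "{Inl i, Inr j}"]) auto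
lemma E3: "u \<in> Kbip_V m n \<Longrightarrow> v \<in> Kbip_V p q \<Longrightarrow> {Inl u, Inr v} \<in> join_E (Kbip_V m n) (Kbip_E m n) (Kbip_V p q) (Kbip_E p q)"
  unfolding join_E_def by blast

lemma Vf_cases:
  assumes "u \<in> join_V (Kbip_V m n) (Kbip_V p q)"
  obtains (A) i where "u = Inl (Inl i)" "i < m" | (B) j where "u = Inl (Inr j)" "j < n"
    | (C) i where "u = Inr (Inl i)" "i < p" | (D) j where "u = Inr (Inr j)" "j < q"
  using assms unfolding Vf_iff by (auto split: sum.splits)

lemma Ef_intro:
  assumes u: "u \<in> join_V (Kbip_V m n) (Kbip_V p q)" and v: "v \<in> join_V (Kbip_V m n) (Kbip_V p q)"
    and d: "part4 u \<noteq> part4 v"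
  shows "{u, v} \<in> join_E (Kbip_V m n) (Kbip_E m n) (Kbip_V p q) (Kbip_E p q)"
proof -
  have kv: "Inl a \<in> join_V (Kbip_V m n) (Kbip_V p q) \<Longrightarrow> a \<in> Kbip_V m n" for a
    unfolding join_V_def by auto
  have kv2: "Inr a \<in> join_V (Kbip_V m n) (Kbip_V p q) \<Longrightarrow> a \<in> Kbip_V p q" for a
    unfolding join_V_def by auto
  show ?thesis
  proof (cases u)
    case (Inl a)
    show ?thesis
    proof (cases v)
      case (Inl b)
      from u v d \<open>u = Inl a\<close> \<open>v = Inl b\<close> show ?thesis
        by (cases rule: Vf_cases[OF u]; cases rule: Vf_cases[OF v])
           (auto simp: part4_def insert_commute intro: E1)
    next
      case (Inr b)
      then show ?thesis using E3[OF kv kv2] u v \<open>u = Inl a\<close> by simp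
    qed
  next
    case (Inr a)
    show ?thesis
    proof (cases v)
      case (Inl b)
      then show ?thesis using E3[OF kv kv2] u v \<open>u = Inr a\<close> by (simp add: insert_commute)
    next
      case (Inr b)
      from u v d \<open>u = Inr a\<close> \<open>v = Inr b\<close> show ?thesis
        by (cases rule: Vf_cases[OF u]; cases rule: Vf_cases[OF v])
           (auto simp: part4_def insert_commute intro: E2)
    qed
  qed
qed


definition Enat :: "nat \<Rightarrow> nat \<Rightarrow> nat \<Rightarrow> nat \<Rightarrow> nat set set" where
  "Enat m n p q = {{i, j} | i j. i < m + n + p + q \<and> j < m + n + p + q \<and> blk4 m n p i \<noteq> blk4 m n p j}"

lemma Enat_mem:
  assumes "{v, w} \<in> Enat m n p q"
  shows "v < m + n + p + q \<and> w < m + n + p + q \<and> blk4 m n p v \<noteq> blk4 m n p w"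
proof -
  obtain i j where ij: "{v, w} = {i, j}" "i < m + n + p + q" "j < m + n + p + q" "blk4 m n p i \<noteq> blk4 m n p j"
    using assms unfolding Enat_def by blast
  then have "(v = i \<and> w = j) \<or> (v = j \<and> w = i)" by (simp add: doubleton_eq_iff)
  then show ?thesis using ij by auto
qed

lemma Enat_intro:
  "i < m + n + p + q \<Longrightarrow> j < m + n + p + q \<Longrightarrow> blk4 m n p i \<noteq> blk4 m n p j \<Longrightarrow> {i, j} \<in> Enat m n p q"
  unfolding Enat_def by blast

lemma frozen_to_nat:
  assumes pos: "0 < m" "0 < n" "0 < p" "0 < q"
  shows "num_spanning_trees (join_V (Kbip_V m n) (Kbip_V p q))
           (join_E (Kbip_V m n) (Kbip_E m n) (Kbip_V p q) (Kbip_E p q))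
       = num_spanning_trees {0..<m + n + p + q} (Enat m n p q)"
proof -
  let ?V = "join_V (Kbip_V m n) (Kbip_V p q)"
  let ?E = "join_E (Kbip_V m n) (Kbip_E m n) (Kbip_V p q) (Kbip_E p q)"
  let ?g = "gmap m n p"
  let ?N = "m + n + p + q"
  have inj: "inj_on ?g ?V"
    by (rule inj_on_inverseI[where g = "ginv m n p"]) (rule ginv_gmap[OF _ pos])
  have EV: "\<forall>e\<in>?E. e \<subseteq> ?V" using Ef_sub by fastforce
  have gV: "?g ` ?V = {0..<?N}"
  proof
    show "?g ` ?V \<subseteq> {0..<?N}" using gmap_lt[OF _ pos] by auto
    show "{0..<?N} \<subseteq> ?g ` ?V"
    proof
      fix i assume "i \<in> {0..<?N}"
      then have i: "i < ?N" by simp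
      show "i \<in> ?g ` ?V" using gmap_ginv[OF i pos] ginv_in[OF i pos] by (metis imageI)
    qed
  qed
  have gE: "(`) ?g ` ?E = Enat m n p q"
  proof
    show "(`) ?g ` ?E \<subseteq> Enat m n p q"
    proof
      fix e' assume "e' \<in> (`) ?g ` ?E"
      then obtain e where e: "e \<in> ?E" "e' = ?g ` e" by blast
      obtain u v where uv: "e = {u, v}" "u \<in> ?V" "v \<in> ?V" "part4 u \<noteq> part4 v" using Ef_sub[OF e(1)] by blast
      have "e' = {?g u, ?g v}" using e(2) uv(1) by simp
      moreover have "{?g u, ?g v} \<in> Enat m n p q"
        by (rule Enat_intro) (use gmap_lt[OF uv(2) pos] gmap_lt[OF uv(3) pos] gmap_blk[OF uv(2) pos] gmap_blk[OF uv(3) pos] uv(4) in auto)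
      ultimately show "e' \<in> Enat m n p q" by simp
    qed
    show "Enat m n p q \<subseteq> (`) ?g ` ?E"
    proof
      fix e' assume "e' \<in> Enat m n p q"
      then obtain i j where ij: "e' = {i, j}" "i < ?N" "j < ?N" "blk4 m n p i \<noteq> blk4 m n p j"
        unfolding Enat_def by blast
      let ?u = "ginv m n p i" and ?v = "ginv m n p j"
      have u: "?u \<in> ?V" "?g ?u = i" using ginv_in[OF ij(2) pos] gmap_ginv[OF ij(2) pos] by auto
      have v: "?v \<in> ?V" "?g ?v = j" using ginv_in[OF ij(3) pos] gmap_ginv[OF ij(3) pos] by auto
      have "part4 ?u \<noteq> part4 ?v" using gmap_blk[OF u(1) pos] gmap_blk[OF v(1) pos] u(2) v(2) ij(4) by simp
      then have "{?u, ?v} \<in> ?E" by (rule Ef_intro[OF u(1) v(1)])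
      moreover have "e' = ?g ` {?u, ?v}" using ij(1) u(2) v(2) by simp
      ultimately show "e' \<in> (`) ?g ` ?E" by blast
    qed
  qed
  show ?thesis using tau_iso[OF inj EV] gV gE by simp
qed

lemma simple_Enat: "simple_graph {0..<m + n + p + q} (Enat m n p q)"
  unfolding simple_graph_def Enat_def by auto

definition adj4 :: "nat \<Rightarrow> nat \<Rightarrow> nat \<Rightarrow> nat \<Rightarrow> nat \<Rightarrow> bool" where
  "adj4 m n p i j \<longleftrightarrow> blk4 m n p i \<noteq> blk4 m n p j"

lemma RF_to_AF:
  assumes r: "r < m + n + p + q" and fR: "f \<in> RF {0..<m + n + p + q} (Enat m n p q) r"
  shows "f \<in> {f \<in> AF (m + n + p + q) (adj4 m n p). {v. v < m + n + p + q \<and> f v = v} = {r}}"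
proof -
  let ?N = "m + n + p + q"
  have froot: "f r = r" by (rule RF_root[OF fR])
  have fin: "f v < ?N \<and> (f v = v \<or> adj4 m n p v (f v))" if "v < ?N" for v
  proof (cases "v = r")
    case True then show ?thesis using froot r by simp
  next
    case False
    then have "{v, f v} \<in> Enat m n p q" using RF_edge[OF fR] that by simp
    then show ?thesis using Enat_mem unfolding adj4_def by blast
  qed
  have reach: "\<exists>k. (f^^k) v = r" if "v < ?N" for v using RF_reach[OF fR] that by simp
  have a1: "\<forall>v. ?N \<le> v \<longrightarrow> f v = v" using RF_out[OF fR] by simp
  have a2: "\<forall>v<?N. f v < ?N \<and> (f v = v \<or> adj4 m n p v (f v))" using fin by blast
  have a3: "\<forall>v<?N. \<exists>k. f ((f^^k) v) = (f^^k) v"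
  proof (intro allI impI)
    fix v assume "v < ?N"
    then obtain k where "(f^^k) v = r" using reach by blast
    then show "\<exists>k. f ((f^^k) v) = (f^^k) v" using froot by auto
  qed
  have "f \<in> AF ?N (adj4 m n p)" unfolding AF_def mem_Collect_eq using a1 a2 a3 by blast
  moreover have "{v. v < ?N \<and> f v = v} = {r}"
  proof
    show "{r} \<subseteq> {v. v < ?N \<and> f v = v}" using r froot by simp
    show "{v. v < ?N \<and> f v = v} \<subseteq> {r}"
    proof
      fix v assume "v \<in> {v. v < ?N \<and> f v = v}"
      then have v: "v < ?N" "f v = v" by auto
      obtain k where "(f^^k) v = r" using reach[OF v(1)] by blast
      moreover have "(f^^k) v = v" using funpow_fix[of f v k] v(2) by simp
      ultimately show "v \<in> {r}" by simp
    qed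
  qed
  ultimately show ?thesis by simp
qed

lemma AF_to_RF:
  assumes r: "r < m + n + p + q" and fA: "f \<in> AF (m + n + p + q) (adj4 m n p)"
    and fix1: "{v. v < m + n + p + q \<and> f v = v} = {r}"
  shows "f \<in> RF {0..<m + n + p + q} (Enat m n p q) r"
proof -
  let ?N = "m + n + p + q"
  have out: "f v = v" if "?N \<le> v" for v using fA that unfolding AF_def by auto
  have fin: "f v < ?N \<and> (f v = v \<or> adj4 m n p v (f v))" if "v < ?N" for v using fA that unfolding AF_def by auto
  have acyc: "\<exists>k. f ((f^^k) v) = (f^^k) v" if "v < ?N" for v using fA that unfolding AF_def by auto
  have froot: "f r = r" using fix1 by auto
  have isfix: "w = r" if "w < ?N" "f w = w" for w using fix1 that by auto
  have pown: "(f^^k) v < ?N" if "v < ?N" for v k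
    by (induction k) (use that fin in auto)
  show ?thesis
    unfolding RF_def mem_Collect_eq
  proof (intro conjI allI impI ballI)
    fix v assume "v \<notin> {0..<?N}" then show "f v = v" using out by simp
  next
    show "f r = r" by (rule froot)
  next
    fix v assume v: "v \<in> {0..<?N} - {r}"
    then have "f v \<noteq> v" using isfix by auto
    then have "adj4 m n p v (f v)" "f v < ?N" using fin v by auto
    then show "{v, f v} \<in> Enat m n p q" using v unfolding adj4_def by (intro Enat_intro) auto
  next
    fix v assume "v \<in> {0..<?N}"
    then have v: "v < ?N" by simp
    obtain k where "f ((f^^k) v) = (f^^k) v" using acyc[OF v] by blast
    then have "(f^^k) v = r" using isfix pown[OF v] by blast
    then show "\<exists>k. (f^^k) v = r" by blast
  qed
qed

lemma RF_AF:
  assumes r: "r < m + n + p + q"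
  shows "RF {0..<m + n + p + q} (Enat m n p q) r =
    {f \<in> AF (m + n + p + q) (adj4 m n p). {v. v < m + n + p + q \<and> f v = v} = {r}}"
  using RF_to_AF[OF r] AF_to_RF[OF r] by blast

lemma card_AF1:
  assumes pos: "0 < m" "0 < n" "0 < p" "0 < q"
  shows "card {f \<in> AF (m + n + p + q) (adj4 m n p). card {v. v < m + n + p + q \<and> f v = v} = 1}
    = (m + n + p + q) * num_spanning_trees {0..<m + n + p + q} (Enat m n p q)"
proof -
  let ?N = "m + n + p + q"
  let ?A = "AF ?N (adj4 m n p)"
  let ?S = "\<lambda>r. {f \<in> ?A. {v. v < ?N \<and> f v = v} = {r}}"
  have finA: "finite ?A"
  proof (rule finite_subset)
    show "?A \<subseteq> {f. (\<forall>i\<in>{0..<?N}. f i \<in> {0..<?N}) \<and> (\<forall>i. i \<notin> {0..<?N} \<longrightarrow> f i = i)}"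
    proof (rule subsetI)
      fix f assume "f \<in> ?A"
      then have h1: "\<forall>v. ?N \<le> v \<longrightarrow> f v = v" and h2: "\<forall>v<?N. f v < ?N"
        unfolding AF_def by auto
      have "\<forall>i\<in>{0..<?N}. f i \<in> {0..<?N}" using h2 by simp
      moreover have "\<forall>i. i \<notin> {0..<?N} \<longrightarrow> f i = i" using h1 by simp
      ultimately show "f \<in> {f. (\<forall>i\<in>{0..<?N}. f i \<in> {0..<?N}) \<and> (\<forall>i. i \<notin> {0..<?N} \<longrightarrow> f i = i)}"
        by blast
    qed
    show "finite {f. (\<forall>i\<in>{0..<?N}. f i \<in> {0..<?N}) \<and> (\<forall>i. i \<notin> {0..<?N} \<longrightarrow> f i = i)}"
      by (rule finite_bounded_functions) auto
  qed
  have eq: "{f \<in> ?A. card {v. v < ?N \<and> f v = v} = 1} = (\<Union>r\<in>{0..<?N}. ?S r)"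
  proof
    show "{f \<in> ?A. card {v. v < ?N \<and> f v = v} = 1} \<subseteq> (\<Union>r\<in>{0..<?N}. ?S r)"
    proof
      fix f assume "f \<in> {f \<in> ?A. card {v. v < ?N \<and> f v = v} = 1}"
      then have fA: "f \<in> ?A" and c: "card {v. v < ?N \<and> f v = v} = 1" by auto
      have "\<exists>r. {v. v < ?N \<and> f v = v} = {r}" using c by (simp add: card_1_singleton_iff)
      then obtain r where r: "{v. v < ?N \<and> f v = v} = {r}" by blast
      then have "r < ?N" by auto
      then show "f \<in> (\<Union>r\<in>{0..<?N}. ?S r)" using fA r by auto
    qed
    show "(\<Union>r\<in>{0..<?N}. ?S r) \<subseteq> {f \<in> ?A. card {v. v < ?N \<and> f v = v} = 1}"
    proof
      fix f assume "f \<in> (\<Union>r\<in>{0..<?N}. ?S r)"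
      then obtain r where "f \<in> ?S r" by blast
      then have "f \<in> ?A" "{v. v < ?N \<and> f v = v} = {r}" by auto
      then show "f \<in> {f \<in> ?A. card {v. v < ?N \<and> f v = v} = 1}" by simp
    qed
  qed
  have finS: "finite (?S r)" for r by (rule finite_subset[OF _ finA]) auto
  have disj: "?S r \<inter> ?S r' = {}" if "r \<noteq> r'" for r r'
  proof (rule ccontr)
    assume "?S r \<inter> ?S r' \<noteq> {}"
    then obtain f where "f \<in> ?S r" "f \<in> ?S r'" by blast
    then have "{r} = {r'}" by simp
    with that show False by simp
  qed
  have "card (\<Union>r\<in>{0..<?N}. ?S r) = (\<Sum>r\<in>{0..<?N}. card (?S r))"
    by (rule card_UN_disjoint) (use finS disj in auto)
  also have "\<dots> = (\<Sum>r\<in>{0..<?N}. num_spanning_trees {0..<?N} (Enat m n p q))"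
  proof (rule sum.cong[OF refl])
    fix r assume "r \<in> {0..<?N}"
    then have r: "r < ?N" by simp
    have "num_spanning_trees {0..<?N} (Enat m n p q) = card (RF {0..<?N} (Enat m n p q) r)"
      by (rule tau_RF[OF simple_Enat]) (use r in auto)
    then show "card (?S r) = num_spanning_trees {0..<?N} (Enat m n p q)" using RF_AF[OF r] by simp
  qed
  also have "\<dots> = ?N * num_spanning_trees {0..<?N} (Enat m n p q)" by simp
  finally show ?thesis using eq by simp
qed


lemma blk4_rep: "i < 4 \<Longrightarrow> blk4 m n p i = i" unfolding blk4_def by simp
lemma blk4_rng: "blk4 m n p i < 4" unfolding blk4_def by simp

lemma bsz4:
  assumes pos: "0 < m" "0 < n" "0 < p" "0 < q"
  shows "bsz (m + n + p + q) (blk4 m n p) 0 = m" "bsz (m + n + p + q) (blk4 m n p) 1 = n"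
    "bsz (m + n + p + q) (blk4 m n p) 2 = p" "bsz (m + n + p + q) (blk4 m n p) 3 = q"
proof -
  let ?N = "m + n + p + q"
  have s0: "{u. u < ?N \<and> blk4 m n p u = 0} = insert 0 {4..<3 + m}"
    using pos unfolding blk4_def by auto
  have s1: "{u. u < ?N \<and> blk4 m n p u = 1} = insert 1 {3 + m..<2 + m + n}"
    using pos unfolding blk4_def by auto
  have s2: "{u. u < ?N \<and> blk4 m n p u = 2} = insert 2 {2 + m + n..<1 + m + n + p}"
    using pos unfolding blk4_def by auto
  have s3: "{u. u < ?N \<and> blk4 m n p u = 3} = insert 3 {1 + m + n + p..<?N}"
    using pos unfolding blk4_def by auto
  show "bsz ?N (blk4 m n p) 0 = m" unfolding bsz_def s0 using pos by simp
  show "bsz ?N (blk4 m n p) 1 = n" unfolding bsz_def s1 using pos by simp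
  show "bsz ?N (blk4 m n p) 2 = p" unfolding bsz_def s2 using pos by simp
  show "bsz ?N (blk4 m n p) 3 = q" unfolding bsz_def s3 using pos by simp
qed

lemma lapx_bmat:
  fixes X :: "'a::comm_ring_1"
  shows "lapx (m + n + p + q) (adj4 m n p) X = bmat (m + n + p + q) (blk4 m n p) X"
proof (rule eq_matI)
  let ?N = "m + n + p + q"
  fix i j assume "i < dim_row (bmat ?N (blk4 m n p) X)" "j < dim_col (bmat ?N (blk4 m n p) X)"
  then have i: "i < ?N" and j: "j < ?N" unfolding bmat_def by auto
  have c: "card {u. u < ?N \<and> u \<noteq> i' \<and> blk4 m n p i' \<noteq> blk4 m n p u} = ?N - bsz ?N (blk4 m n p) (blk4 m n p i')" for i'
  proof -
    have "{u. u < ?N \<and> u \<noteq> i' \<and> blk4 m n p i' \<noteq> blk4 m n p u} = {w. w < ?N \<and> blk4 m n p w \<noteq> blk4 m n p i'}"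
      by auto
    then show ?thesis using card_other by simp
  qed
  show "lapx ?N (adj4 m n p) X $$ (i, j) = bmat ?N (blk4 m n p) X $$ (i, j)"
    unfolding lapx_def bmat_def adj4_def using i j c by simp
qed (auto simp: lapx_def bmat_def)

theorem corollary4p2:
  fixes m n p q :: nat
  assumes "m > 0" "n > 0" "p > 0" "q > 0"
  shows "num_spanning_trees (join_V (Kbip_V m n) (Kbip_V p q))
           (join_E (Kbip_V m n) (Kbip_E m n) (Kbip_V p q) (Kbip_E p q))
         = (m+n+p+q)^2 * (m+p+q)^(n-1) * (n+p+q)^(m-1) * (p+m+n)^(q-1) * (q+m+n)^(p-1)"
proof -
  have pos: "0 < m" "0 < n" "0 < p" "0 < q" using assms by auto
  let ?N = "m + n + p + q"
  let ?X = "monom (1::int) 1"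
  let ?a = "bsz ?N (blk4 m n p)"
  let ?c = "\<lambda>f. card {v. v < ?N \<and> f v = v}"
  let ?A = "AF ?N (adj4 m n p)"
  let ?P = "\<Prod>b\<in>{0..<4}. (?N - ?a b) ^ (?a b - 1)"
  have A: "det (lapx ?N (adj4 m n p) ?X) = (\<Sum>f\<in>?A. ?X ^ ?c f)" by (rule matrix_tree)
  have C: "det (bmat ?N (blk4 m n p) ?X) = ?X * (?X + of_nat ?N) ^ (4 - 1) *
      (\<Prod>b\<in>{0..<4}. (?X + of_nat (?N - ?a b)) ^ (?a b - 1))"
    by (rule bmat_det) (use pos in \<open>auto simp: blk4_rep blk4_rng\<close>)
  have lhs: "coeff (\<Sum>f\<in>?A. ?X ^ ?c f) 1 = int (card {f \<in> ?A. ?c f = 1})"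
  proof -
    have "coeff (\<Sum>f\<in>?A. ?X ^ ?c f) 1 = (\<Sum>f\<in>?A. coeff (?X ^ ?c f) 1)" by (rule coeff_sum)
    also have "\<dots> = (\<Sum>f\<in>?A. if ?c f = 1 then 1 else 0)"
      by (intro sum.cong) (auto simp: monom_power coeff_monom)
    also have "\<dots> = (\<Sum>f\<in>{f \<in> ?A. ?c f = 1}. 1)"
    proof -
      have finA: "finite ?A"
      proof (rule finite_subset)
        show "?A \<subseteq> {f. (\<forall>i\<in>{0..<?N}. f i \<in> {0..<?N}) \<and> (\<forall>i. i \<notin> {0..<?N} \<longrightarrow> f i = i)}"
        proof (rule subsetI)
          fix f assume "f \<in> ?A"
          then have h1: "\<forall>v. ?N \<le> v \<longrightarrow> f v = v" and h2: "\<forall>v<?N. f v < ?N"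
            unfolding AF_def by auto
          have "\<forall>i\<in>{0..<?N}. f i \<in> {0..<?N}" using h2 by simp
          moreover have "\<forall>i. i \<notin> {0..<?N} \<longrightarrow> f i = i" using h1 by simp
          ultimately show "f \<in> {f. (\<forall>i\<in>{0..<?N}. f i \<in> {0..<?N}) \<and> (\<forall>i. i \<notin> {0..<?N} \<longrightarrow> f i = i)}"
            by blast
        qed
        show "finite {f. (\<forall>i\<in>{0..<?N}. f i \<in> {0..<?N}) \<and> (\<forall>i. i \<notin> {0..<?N} \<longrightarrow> f i = i)}"
          by (rule finite_bounded_functions) auto
      qed
      show ?thesis by (rule sum.inter_filter[symmetric]) (rule finA)
    qed
    also have "\<dots> = int (card {f \<in> ?A. ?c f = 1})" by simp
    finally show ?thesis .
  qed
  have rhs: "coeff (?X * (?X + of_nat ?N) ^ (4 - 1) * (\<Prod>b\<in>{0..<4}. (?X + of_nat (?N - ?a b)) ^ (?a b - 1))) 1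
      = int (?N ^ 3 * ?P)"
  proof -
    let ?R = "(?X + of_nat ?N) ^ (4 - 1) * (\<Prod>b\<in>{0..<4}. (?X + of_nat (?N - ?a b)) ^ (?a b - 1))"
    have "coeff (?X * (?X + of_nat ?N) ^ (4 - 1) * (\<Prod>b\<in>{0..<4}. (?X + of_nat (?N - ?a b)) ^ (?a b - 1))) 1
        = coeff (?X * ?R) 1" by (simp add: mult.assoc)
    also have "\<dots> = coeff ?R 0" by (simp add: coeff_monom_mult)
    also have "\<dots> = poly ?R 0" by (simp add: poly_0_coeff_0)
    also have "\<dots> = int ?N ^ 3 * (\<Prod>b\<in>{0..<4}. int (?N - ?a b) ^ (?a b - 1))"
      by (simp add: poly_prod poly_monom)
    also have "\<dots> = int (?N ^ 3 * ?P)" by (simp add: of_nat_prod)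
    finally show ?thesis .
  qed
  have "int (card {f \<in> ?A. ?c f = 1}) = int (?N ^ 3 * ?P)"
    using A C lapx_bmat[of m n p q ?X] lhs rhs by simp
  then have c1: "card {f \<in> ?A. ?c f = 1} = ?N ^ 3 * ?P" by (rule of_nat_eq_iff[THEN iffD1])
  have c2: "card {f \<in> ?A. ?c f = 1} = ?N * num_spanning_trees {0..<?N} (Enat m n p q)"
    by (rule card_AF1[OF pos])
  have Npos: "0 < ?N" using pos by simp
  have e1: "?N * num_spanning_trees {0..<?N} (Enat m n p q) = ?N ^ 3 * ?P"
    by (rule trans[OF c2[symmetric] c1])
  have n3: "?N ^ 3 = ?N * ?N ^ 2" by (simp only: power3_eq_cube power2_eq_square mult.assoc)
  have e2: "?N * num_spanning_trees {0..<?N} (Enat m n p q) = ?N * (?N ^ 2 * ?P)"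
    using e1 unfolding n3 by (simp only: mult.assoc)
  have t: "num_spanning_trees {0..<?N} (Enat m n p q) = ?N ^ 2 * ?P"
    using e2 pos by simp
  have P: "?P = (?N - m) ^ (m - 1) * (?N - n) ^ (n - 1) * (?N - p) ^ (p - 1) * (?N - q) ^ (q - 1)"
    using bsz4[OF pos] by (simp add: eval_nat_numeral prod.atLeast0_lessThan_Suc mult_ac)
  have "?N - m = n + p + q" "?N - n = m + p + q" "?N - p = q + m + n" "?N - q = p + m + n" by auto
  then have "?P = (n + p + q) ^ (m - 1) * (m + p + q) ^ (n - 1) * (q + m + n) ^ (p - 1) * (p + m + n) ^ (q - 1)"
    using P by (simp add: ac_simps)
  then show ?thesis using frozen_to_nat[OF pos] t by (simp add: mult_ac)
qed


end
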